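(* Let $A\in\mathbb{C}^{n\times n}$, and fix $A^-\in A\{1\}$ and $A^{GD}\in A\{GD\}$. For $X\in\mathbb{C}^{n\times n}$ the following are equivalent: (i) $X = A^{-}AA^{GD}$; (ii) $XAX =X$, $XA= A^{-}A$, $AX = AA^{GD}$, and $AXA = A$; (iii) $XAX =X$, $XA= A^{-}A$, and $AX = AA^{GD}$; (iv) $A^{-}AX =X$, $XA= A^{-}A$, $AX = AA^{GD}$, and $XAA^{GD} = X$.
   Context: For $A\in\mathbb{C}^{n\times n}$, $ind(A)$ is the smallest nonnegative integer $k$ with $\mathrm{rank}(A^k)=\mathrm{rank}(A^{k+1})$. $A\{1\}$ is the set of matrices $X$ with $AXA=A$. With $k=ind(A)$, $A\{GD\}$ is the set of G-Drazin inverses of $A$: matrices $X$ with $AXA=A$, $XA^{k+1}=A^k$, $A^{k+1}X=A^k$. *)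

theory Defs
  imports "HOL-Analysis.Analysis"
begin

primrec mpow :: "'a::comm_ring_1^'n^'n \<Rightarrow> nat \<Rightarrow> 'a^'n^'n" where
  "mpow A 0 = mat 1"
| "mpow A (Suc k) = A ** mpow A k"

definition ind :: "complex^'n^'n \<Rightarrow> nat" where
  "ind A = (LEAST k. rank (mpow A k) = rank (mpow A (Suc k)))"

definition inner_inverses :: "complex^'n^'n \<Rightarrow> (complex^'n^'n) set" where
  "inner_inverses A = {X. A ** X ** A = A}"

definition GD_inverses :: "complex^'n^'n \<Rightarrow> (complex^'n^'n) set" where
  "GD_inverses A = {X. A ** X ** A = A
      \<and> X ** mpow A (Suc (ind A)) = mpow A (ind A)
      \<and> mpow A (Suc (ind A)) ** X = mpow A (ind A)}"

end

theory Submission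
  imports Defs
begin

theorem theorem3p8:
  fixes A Am AGD X :: "complex^'n^'n"
  assumes "Am \<in> inner_inverses A"
    and "AGD \<in> GD_inverses A"
  shows "(X = Am ** A ** AGD
          \<longleftrightarrow> (X ** A ** X = X \<and> X ** A = Am ** A \<and> A ** X = A ** AGD \<and> A ** X ** A = A))
       \<and> ((X ** A ** X = X \<and> X ** A = Am ** A \<and> A ** X = A ** AGD \<and> A ** X ** A = A)
          \<longleftrightarrow> (X ** A ** X = X \<and> X ** A = Am ** A \<and> A ** X = A ** AGD))
       \<and> ((X ** A ** X = X \<and> X ** A = Am ** A \<and> A ** X = A ** AGD)
          \<longleftrightarrow> (Am ** A ** X = X \<and> X ** A = Am ** A \<and> A ** X = A ** AGD \<and> X ** A ** AGD = X))"
proof -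
  have M: "A ** Am ** A = A" using assms(1) by (simp add: inner_inverses_def)
  have G: "A ** AGD ** A = A" using assms(2) by (simp add: GD_inverses_def)
  note as = matrix_mul_assoc
  have i_ii: "X ** A ** X = X \<and> X ** A = Am ** A \<and> A ** X = A ** AGD \<and> A ** X ** A = A"
    if "X = Am ** A ** AGD"
  proof -
    have 1: "X ** A = Am ** A" using that G by (metis as)
    have 2: "A ** X = A ** AGD" using that M by (metis as)
    have 3: "X ** A ** X = X" using 1 that M by (metis as)
    have 4: "A ** X ** A = A" using 2 G by (metis as)
    show ?thesis using 1 2 3 4 by blast
  qed
  have iii_i: "X = Am ** A ** AGD"
    if "X ** A ** X = X" "X ** A = Am ** A" "A ** X = A ** AGD"
    using that by (metis as)
  have iii_ii: "A ** X ** A = A" if "X ** A = Am ** A" using that M by (metis as)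
  have iii_iv: "Am ** A ** X = X \<and> X ** A ** AGD = X"
    if "X ** A ** X = X" "X ** A = Am ** A" "A ** X = A ** AGD"
    using that by (metis as)
  have iv_iii: "X ** A ** X = X"
    if "A ** X = A ** AGD" "X ** A ** AGD = X" using that by (metis as)
  show ?thesis using i_ii iii_i iii_ii iii_iv iv_iii by blast
qed

end
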